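(* For the continuous-time (Hamiltonian) one-item Grover search problem with $N>1$, the minimum query time $T$ for which there exists a protocol with $P_{win}=1$ is $$T=\frac{1}{\pi}\frac{N}{\sqrt{N-1}}\arccos\frac{1}{\sqrt N}.$$ Asymptotically this equals $\frac12\sqrt N-\frac1\pi+O(1/\sqrt N)$.
   Context: Oracle-problem framework (continuous case). We are given finite-dimensional Hilbert spaces $\mathcal{A},\mathcal{M},\mathcal{M}'$, a pure state $|\psi_0\rangle\in\mathcal{A}$, a Hermitian $H$ on $\mathcal{A}\otimes\mathcal{M}$, and positive operators $\{\Pi_x\}$ on $\mathcal{A}\otimes\mathcal{M}'$. A protocol with query time $T$ and success probability $P_{win}$ consists of positive operators $\rho(t)$ on $\mathcal{A}$ and $\tilde\rho(t)$ on $\mathcal{A}\otimes\mathcal{M}$ for $0\le t\le T$ ($\tilde\rho$ continuous), and $\tilde\rho'$ on $\mathcal{A}\otimes\mathcal{M}'$, such that: - $\rho(0)=|\psi_0\rangle\langle\psi_0|$; - $\mathrm{Tr}_\mathcal{M}\tilde\rho(t)=\rho(t)$; - $\frac{d}{dt}\rho(t)=-i\,\mathrm{Tr}_\mathcal{M}[H\tilde\rho(t)-\tilde\rho(t)H]$; - $\mathrm{Tr}_{\mathcal{M}'}\tilde\rho'=\rho(T)$; - $P_{win}\le\mathrm{Tr}[\Pi_x\tilde\rho']$ for all $x$. One-item Grover search. Take $\mathcal{A}=\mathrm{span}\{|j\rangle: j\in\{1,\dots,N\}\}$ and $\mathcal{M}=\mathcal{M}'=\mathrm{span}\{|j\rangle: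 j\in\{0,1,\dots,N\}\}$. Set $|\psi_0\rangle=N^{-1/2}\sum_{j=1}^N|j\rangle$ and $H=\pi\sum_{j=1}^N|j\rangle\langle j|_\mathcal{A}\otimes|j\rangle\langle j|_\mathcal{M}$. The verification operators are $\Pi_j=N|j\rangle\langle j|_\mathcal{A}\otimes|j\rangle\langle j|_{\mathcal{M}'}$ for $j=1,\dots,N$. *)

theory Defs
  imports "HOL-Analysis.Analysis" "HOL-Library.Landau_Symbols"
begin

text \<open>Operators on finite-dimensional spaces are represented by their matrix
  entries (kernels) with respect to a fixed orthonormal basis indexed by a finite
  index set I; entries outside I are irrelevant.  Spaces M = M': basis |m>, m in {0..N}.\<close>

definition idxA :: "nat \<Rightarrow> nat set" where "idxA N = {1..N}"
definition idxM :: "nat \<Rightarrow> nat set" where "idxM N = {0..N}"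
definition idxAM :: "nat \<Rightarrow> (nat \<times> nat) set" where "idxAM N = idxA N \<times> idxM N"

definition psd_op :: "'i set \<Rightarrow> ('i \<Rightarrow> 'i \<Rightarrow> complex) \<Rightarrow> bool" where
  "psd_op I X \<longleftrightarrow> (\<forall>v :: 'i \<Rightarrow> complex.
     (\<Sum>a\<in>I. \<Sum>b\<in>I. cnj (v a) * X a b * v b) \<in> \<real> \<and>
     0 \<le> Re (\<Sum>a\<in>I. \<Sum>b\<in>I. cnj (v a) * X a b * v b))"

definition op_mult :: "'i set \<Rightarrow> ('i \<Rightarrow> 'i \<Rightarrow> complex) \<Rightarrow> ('i \<Rightarrow> 'i \<Rightarrow> complex) \<Rightarrow> ('i \<Rightarrow> 'i \<Rightarrow> complex)" where
  "op_mult I X Y = (\<lambda>a b. \<Sum>c\<in>I. X a c * Y c b)"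

definition op_trace :: "'i set \<Rightarrow> ('i \<Rightarrow> 'i \<Rightarrow> complex) \<Rightarrow> complex" where
  "op_trace I X = (\<Sum>a\<in>I. X a a)"

definition ptrace2 :: "'k set \<Rightarrow> ('j \<times> 'k \<Rightarrow> 'j \<times> 'k \<Rightarrow> complex) \<Rightarrow> ('j \<Rightarrow> 'j \<Rightarrow> complex)" where
  "ptrace2 K X = (\<lambda>j j'. \<Sum>m\<in>K. X (j, m) (j', m))"

definition psi0 :: "nat \<Rightarrow> nat \<Rightarrow> complex" where
  "psi0 N j = complex_of_real (1 / sqrt (real N))"

definition groverH :: "nat \<Rightarrow> nat \<times> nat \<Rightarrow> nat \<times> nat \<Rightarrow> complex" where
  "groverH N = (\<lambda>(a, m) (a', m').
      if a = a' \<and> m = m' \<and> a = m \<and> a \<in> idxA N then complex_of_real pi else 0)"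

definition groverPi :: "nat \<Rightarrow> nat \<Rightarrow> nat \<times> nat \<Rightarrow> nat \<times> nat \<Rightarrow> complex" where
  "groverPi N x = (\<lambda>(a, m) (a', m').
      if a = x \<and> a' = x \<and> m = x \<and> m' = x then of_nat N else 0)"

definition grover_protocol ::
  "nat \<Rightarrow> real \<Rightarrow> real \<Rightarrow> (real \<Rightarrow> nat \<Rightarrow> nat \<Rightarrow> complex)
    \<Rightarrow> (real \<Rightarrow> nat \<times> nat \<Rightarrow> nat \<times> nat \<Rightarrow> complex)
    \<Rightarrow> (nat \<times> nat \<Rightarrow> nat \<times> nat \<Rightarrow> complex) \<Rightarrow> bool" where
  "grover_protocol N T P \<rho> \<rho>t \<rho>' \<longleftrightarrow>
     0 \<le> T \<and>
     (\<forall>t\<in>{0..T}. psd_op (idxA N) (\<rho> t)) \<and>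
     (\<forall>t\<in>{0..T}. psd_op (idxAM N) (\<rho>t t)) \<and>
     psd_op (idxAM N) \<rho>' \<and>
     (\<forall>a\<in>idxAM N. \<forall>b\<in>idxAM N. continuous_on {0..T} (\<lambda>t. \<rho>t t a b)) \<and>
     (\<forall>j\<in>idxA N. \<forall>j'\<in>idxA N. \<rho> 0 j j' = psi0 N j * cnj (psi0 N j')) \<and>
     (\<forall>t\<in>{0..T}. \<forall>j\<in>idxA N. \<forall>j'\<in>idxA N.
        ptrace2 (idxM N) (\<rho>t t) j j' = \<rho> t j j') \<and>
     (\<forall>t\<in>{0..T}. \<forall>j\<in>idxA N. \<forall>j'\<in>idxA N.
        ((\<lambda>s. \<rho> s j j') has_vector_derivative
           (- \<i> * ptrace2 (idxM N)
               (\<lambda>a b. op_mult (idxAM N) (groverH N) (\<rho>t t) a b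
                      - op_mult (idxAM N) (\<rho>t t) (groverH N) a b) j j'))
         (at t within {0..T})) \<and>
     (\<forall>j\<in>idxA N. \<forall>j'\<in>idxA N. ptrace2 (idxM N) \<rho>' j j' = \<rho> T j j') \<and>
     (\<forall>x\<in>idxA N. P \<le> Re (op_trace (idxAM N) (op_mult (idxAM N) (groverPi N x) \<rho>')))"

end

theory Submission
  imports Defs "HOL-Real_Asymp.Real_Asymp"
begin


definition qf :: "'i set \<Rightarrow> ('i\<Rightarrow>'i\<Rightarrow>complex) \<Rightarrow> ('i\<Rightarrow>complex) \<Rightarrow> ('i\<Rightarrow>complex) \<Rightarrow> complex" where
  "qf I X v w = (\<Sum>a\<in>I. \<Sum>b\<in>I. cnj (v a) * X a b * w b)"

lemma qf_cong: "(\<And>a. a \<in> I \<Longrightarrow> v a = v' a) \<Longrightarrow> (\<And>a. a \<in> I \<Longrightarrow> w a = w' a) \<Longrightarrow> qf I X v w = qf I X v' w'"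
  unfolding qf_def by (intro sum.cong refl) auto

lemma qf_add_left: "qf I X (\<lambda>a. v a + v' a) w = qf I X v w + qf I X v' w"
  unfolding qf_def by (simp add: distrib_left distrib_right sum.distrib)
lemma qf_add_right: "qf I X v (\<lambda>a. w a + w' a) = qf I X v w + qf I X v w'"
  unfolding qf_def by (simp add: distrib_left distrib_right sum.distrib)
lemma qf_scale_left: "qf I X (\<lambda>a. c * v a) w = cnj c * qf I X v w"
  unfolding qf_def by (simp add: sum_distrib_left mult.assoc)
lemma qf_scale_right: "qf I X v (\<lambda>a. c * w a) = c * qf I X v w"
  unfolding qf_def by (simp add: sum_distrib_left mult_ac)
lemma qf_minus_left: "qf I X (\<lambda>a. - v a) w = - qf I X v w"
  unfolding qf_def by (simp add: sum_negf)
lemma qf_minus_right: "qf I X v (\<lambda>a. - w a) = - qf I X v w"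
  unfolding qf_def by (simp add: sum_negf)
lemma qf_diff_left: "qf I X (\<lambda>a. v a - v' a) w = qf I X v w - qf I X v' w"
  unfolding qf_def by (simp add: algebra_simps sum_subtractf)
lemma qf_diff_right: "qf I X v (\<lambda>a. w a - w' a) = qf I X v w - qf I X v w'"
  unfolding qf_def by (simp add: algebra_simps sum_subtractf)
lemma qf_sum_left: "qf I X (\<lambda>a. \<Sum>k\<in>K. d k a) w = (\<Sum>k\<in>K. qf I X (d k) w)"
  unfolding qf_def by (simp add: sum_distrib_left sum_distrib_right sum.swap[of _ K])
lemma qf_sum_right: "qf I X v (\<lambda>a. \<Sum>k\<in>K. d k a) = (\<Sum>k\<in>K. qf I X v (d k))"
  unfolding qf_def by (simp add: sum_distrib_left sum_distrib_right sum.swap[of _ K])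

lemma psd_qf_real: "psd_op I X \<Longrightarrow> qf I X v v \<in> \<real>"
  unfolding psd_op_def qf_def by blast
lemma psd_qf_nonneg: "psd_op I X \<Longrightarrow> 0 \<le> Re (qf I X v v)"
  unfolding psd_op_def qf_def by blast

lemma psd_cross:
  assumes "psd_op I X"
  shows "Re (qf I X v w + qf I X w v) \<le> Re (qf I X v v) + Re (qf I X w w)"
proof -
  have "0 \<le> Re (qf I X (\<lambda>a. v a - w a) (\<lambda>a. v a - w a))" by (rule psd_qf_nonneg[OF assms])
  also have "qf I X (\<lambda>a. v a - w a) (\<lambda>a. v a - w a) = qf I X v v - qf I X v w - qf I X w v + qf I X w w"
    by (simp add: qf_diff_left qf_diff_right)
  finally show ?thesis by simp
qed

lemma psd_cross_ab:
  assumes "psd_op I X"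
  shows "a * b * Re (qf I X v w + qf I X w v) \<le> a^2 * Re (qf I X v v) + b^2 * Re (qf I X w w)"
proof -
  have "Re (qf I X (\<lambda>x. of_real a * v x) (\<lambda>x. of_real b * w x) + qf I X (\<lambda>x. of_real b * w x) (\<lambda>x. of_real a * v x))
     \<le> Re (qf I X (\<lambda>x. of_real a * v x) (\<lambda>x. of_real a * v x)) + Re (qf I X (\<lambda>x. of_real b * w x) (\<lambda>x. of_real b * w x))"
    by (rule psd_cross[OF assms])
  then show ?thesis by (simp add: qf_scale_left qf_scale_right power2_eq_square algebra_simps)
qed

lemma psd_sum_bound:
  assumes "psd_op I X" "finite K"
  shows "Re (qf I X (\<lambda>a. \<Sum>k\<in>K. d k a) (\<lambda>a. \<Sum>k\<in>K. d k a)) \<le> real (card K) * (\<Sum>k\<in>K. Re (qf I X (d k) (d k)))"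
proof -
  have "2 * Re (qf I X (\<lambda>a. \<Sum>k\<in>K. d k a) (\<lambda>a. \<Sum>k\<in>K. d k a))
      = (\<Sum>k\<in>K. \<Sum>l\<in>K. Re (qf I X (d k) (d l) + qf I X (d l) (d k)))"
  proof -
    have "qf I X (\<lambda>a. \<Sum>k\<in>K. d k a) (\<lambda>a. \<Sum>k\<in>K. d k a) = (\<Sum>k\<in>K. \<Sum>l\<in>K. qf I X (d k) (d l))"
      by (simp add: qf_sum_left qf_sum_right)
    moreover have "(\<Sum>k\<in>K. \<Sum>l\<in>K. Re (qf I X (d l) (d k))) = (\<Sum>k\<in>K. \<Sum>l\<in>K. Re (qf I X (d k) (d l)))"
      by (rule sum.swap)
    ultimately show ?thesis by (simp only: sum.distrib Re_sum mult_2 plus_complex.sel)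
  qed
  also have "\<dots> \<le> (\<Sum>k\<in>K. \<Sum>l\<in>K. Re (qf I X (d k) (d k)) + Re (qf I X (d l) (d l)))"
    by (intro sum_mono psd_cross[OF assms(1)])
  also have "\<dots> = 2 * (real (card K) * (\<Sum>k\<in>K. Re (qf I X (d k) (d k))))"
    by (simp add: sum.distrib sum_distrib_left)
  finally show ?thesis by simp
qed


lemma idxA_sub: "j \<in> idxA N \<Longrightarrow> j \<in> idxM N"
  by (simp add: idxA_def idxM_def)

lemma finite_idx[simp]: "finite (idxA N)" "finite (idxM N)" "finite (idxAM N)"
  by (simp_all add: idxA_def idxM_def idxAM_def)

lemma opH_left:
  assumes "j \<in> idxA N" "m \<in> idxM N"
  shows "op_mult (idxAM N) (groverH N) X (j,m) b = (if m = j then complex_of_real pi * X (j,j) b else 0)"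
proof -
  have "op_mult (idxAM N) (groverH N) X (j,m) b
     = (\<Sum>c\<in>idxAM N. if c = (j,j) then (if m = j then complex_of_real pi * X (j,j) b else 0) else 0)"
    unfolding op_mult_def
    by (intro sum.cong refl) (auto simp: groverH_def assms split: prod.splits)
  also have "\<dots> = (if m = j then complex_of_real pi * X (j,j) b else 0)"
    using assms by (simp add: idxAM_def idxA_sub)
  finally show ?thesis .
qed

lemma opH_right:
  assumes "j' \<in> idxA N" "m \<in> idxM N"
  shows "op_mult (idxAM N) X (groverH N) a (j',m) = (if m = j' then complex_of_real pi * X a (j',j') else 0)"
proof -
  have "op_mult (idxAM N) X (groverH N) a (j',m)
     = (\<Sum>c\<in>idxAM N. if c = (j',j') then (if m = j' then complex_of_real pi * X a (j',j') else 0) else 0)"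
    unfolding op_mult_def
    by (intro sum.cong refl) (auto simp: groverH_def assms split: prod.splits)
  also have "\<dots> = (if m = j' then complex_of_real pi * X a (j',j') else 0)"
    using assms by (simp add: idxAM_def idxA_sub)
  finally show ?thesis .
qed

lemma ptrace_comm:
  assumes "j \<in> idxA N" "j' \<in> idxA N"
  shows "ptrace2 (idxM N) (\<lambda>a b. op_mult (idxAM N) (groverH N) X a b - op_mult (idxAM N) X (groverH N) a b) j j'
     = complex_of_real pi * (X (j,j) (j',j) - X (j,j') (j',j'))"
proof -
  have "ptrace2 (idxM N) (\<lambda>a b. op_mult (idxAM N) (groverH N) X a b - op_mult (idxAM N) X (groverH N) a b) j j'
     = (\<Sum>m\<in>idxM N. (if m = j then complex_of_real pi * X (j,j) (j',m) else 0) - (if m = j' then complex_of_real pi * X (j,m) (j',j') else 0))"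
    unfolding ptrace2_def by (intro sum.cong refl) (simp add: opH_left opH_right assms)
  also have "\<dots> = complex_of_real pi * (X (j,j) (j',j) - X (j,j') (j',j'))"
    using assms by (simp add: sum_subtractf idxA_sub algebra_simps)
  finally show ?thesis .
qed


definition ind :: "'i \<Rightarrow> 'i \<Rightarrow> complex" where "ind a = (\<lambda>x. if x = a then 1 else 0)"

lemma qf_ind: "finite I \<Longrightarrow> a \<in> I \<Longrightarrow> b \<in> I \<Longrightarrow> qf I X (ind a) (ind b) = X a b"
proof -
  assume h: "finite I" "a \<in> I" "b \<in> I"
  have "\<And>x. (\<Sum>y\<in>I. cnj (ind a x) * X x y * ind b y) = (if x = a then X a b else 0)"
  proof -
    fix x
    have "(\<Sum>y\<in>I. cnj (ind a x) * X x y * ind b y) = (\<Sum>y\<in>I. if y = b then cnj (ind a x) * X x b else 0)"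
      by (intro sum.cong refl) (simp add: ind_def)
    also have "\<dots> = cnj (ind a x) * X x b" using h by simp
    finally show "(\<Sum>y\<in>I. cnj (ind a x) * X x y * ind b y) = (if x = a then X a b else 0)"
      by (simp add: ind_def)
  qed
  then show ?thesis unfolding qf_def using h by simp
qed

lemma qf_ind_diff: "finite I \<Longrightarrow> a \<in> I \<Longrightarrow> b \<in> I \<Longrightarrow>
   qf I X (\<lambda>x. ind a x - ind b x) (\<lambda>x. ind a x - ind b x) = X a a - X a b - X b a + X b b"
  by (simp add: qf_diff_left qf_diff_right qf_ind)

lemma qf_ind_diff_sym: "qf I X (\<lambda>x. ind a x - ind b x) (\<lambda>x. ind a x - ind b x) = qf I X (\<lambda>x. ind b x - ind a x) (\<lambda>x. ind b x - ind a x)"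
  by (simp add: qf_diff_left qf_diff_right)


definition pv :: "nat \<Rightarrow> nat \<Rightarrow> nat \<times> nat \<Rightarrow> complex" where
  "pv N m = (\<lambda>x. \<Sum>j\<in>idxA N. ind (j,m) x)"

definition dv :: "nat \<Rightarrow> nat \<Rightarrow> nat \<Rightarrow> nat \<times> nat \<Rightarrow> complex" where
  "dv m j k = (\<lambda>x. ind (j,m) x - ind (k,m) x)"

lemma mem_idxAM: "j \<in> idxA N \<Longrightarrow> m \<in> idxM N \<Longrightarrow> (j,m) \<in> idxAM N"
  by (simp add: idxAM_def)

definition rv :: "nat \<Rightarrow> nat \<Rightarrow> nat \<times> nat \<Rightarrow> complex" where
  "rv N m = (\<lambda>x. (1 / of_nat N) * (\<Sum>k\<in>idxA N - {m}. dv m m k x))"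

context
  fixes N :: nat and X :: "nat\<times>nat \<Rightarrow> nat\<times>nat \<Rightarrow> complex" and R :: "nat \<Rightarrow> nat \<Rightarrow> complex"
  assumes N1: "N > 1" and psdX: "psd_op (idxAM N) X"
    and ptr: "\<And>j j'. j \<in> idxA N \<Longrightarrow> j' \<in> idxA N \<Longrightarrow> ptrace2 (idxM N) X j j' = R j j'"
    and diag: "\<And>j. j \<in> idxA N \<Longrightarrow> R j j = 1 / of_nat N"
begin

lemma qf_pv: "m \<in> idxM N \<Longrightarrow> qf (idxAM N) X (pv N m) (pv N m) = (\<Sum>j\<in>idxA N. \<Sum>j'\<in>idxA N. X (j,m) (j',m))"
  unfolding pv_def by (simp add: qf_sum_left qf_sum_right qf_ind mem_idxAM)

lemma F1: "(\<Sum>m\<in>idxM N. qf (idxAM N) X (pv N m) (pv N m)) = (\<Sum>j\<in>idxA N. \<Sum>j'\<in>idxA N. R j j')"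
proof -
  have "(\<Sum>m\<in>idxM N. qf (idxAM N) X (pv N m) (pv N m)) = (\<Sum>m\<in>idxM N. \<Sum>j\<in>idxA N. \<Sum>j'\<in>idxA N. X (j,m) (j',m))"
    by (intro sum.cong refl) (simp add: qf_pv)
  also have "\<dots> = (\<Sum>j\<in>idxA N. \<Sum>m\<in>idxM N. \<Sum>j'\<in>idxA N. X (j,m) (j',m))" by (rule sum.swap)
  also have "\<dots> = (\<Sum>j\<in>idxA N. \<Sum>j'\<in>idxA N. \<Sum>m\<in>idxM N. X (j,m) (j',m))"
    by (rule sum.cong[OF refl], rule sum.swap)
  also have "\<dots> = (\<Sum>j\<in>idxA N. \<Sum>j'\<in>idxA N. R j j')"
    by (intro sum.cong refl) (simp add: ptr[symmetric] ptrace2_def)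
  finally show ?thesis .
qed

lemma F2: "(\<Sum>m\<in>idxM N. \<Sum>j\<in>idxA N. \<Sum>k\<in>idxA N. qf (idxAM N) X (dv m j k) (dv m j k))
   = 2 * of_nat N - 2 * (\<Sum>j\<in>idxA N. \<Sum>j'\<in>idxA N. R j j')"
proof -
  have cardA: "card (idxA N) = N" by (simp add: idxA_def)
  have "(\<Sum>m\<in>idxM N. \<Sum>j\<in>idxA N. \<Sum>k\<in>idxA N. qf (idxAM N) X (dv m j k) (dv m j k))
     = (\<Sum>m\<in>idxM N. \<Sum>j\<in>idxA N. \<Sum>k\<in>idxA N. X (j,m) (j,m) - X (j,m) (k,m) - X (k,m) (j,m) + X (k,m) (k,m))"
    unfolding dv_def by (intro sum.cong refl) (simp add: qf_ind_diff mem_idxAM)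
  also have "\<dots> = (\<Sum>j\<in>idxA N. \<Sum>m\<in>idxM N. \<Sum>k\<in>idxA N. X (j,m) (j,m) - X (j,m) (k,m) - X (k,m) (j,m) + X (k,m) (k,m))"
    by (rule sum.swap[where A="idxM N" and B="idxA N"])
  also have "\<dots> = (\<Sum>j\<in>idxA N. \<Sum>k\<in>idxA N. \<Sum>m\<in>idxM N. X (j,m) (j,m) - X (j,m) (k,m) - X (k,m) (j,m) + X (k,m) (k,m))"
    by (rule sum.cong[OF refl], rule sum.swap)
  also have "\<dots> = (\<Sum>j\<in>idxA N. \<Sum>k\<in>idxA N. R j j - R j k - R k j + R k k)"
    by (intro sum.cong refl) (simp add: ptr[symmetric] ptrace2_def sum.distrib sum_subtractf)
  also have "\<dots> = (\<Sum>j\<in>idxA N. \<Sum>k\<in>idxA N. 2 / of_nat N - R j k - R k j)"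
    by (intro sum.cong refl) (simp add: diag)
  also have "\<dots> = 2 * of_nat N - (\<Sum>j\<in>idxA N. \<Sum>k\<in>idxA N. R j k) - (\<Sum>j\<in>idxA N. \<Sum>k\<in>idxA N. R k j)"
    using N1 by (simp add: sum_subtractf cardA)
  also have "(\<Sum>j\<in>idxA N. \<Sum>k\<in>idxA N. R k j) = (\<Sum>j\<in>idxA N. \<Sum>k\<in>idxA N. R j k)"
    by (rule sum.swap)
  finally show ?thesis by simp
qed


lemma cardA: "card (idxA N) = N" by (simp add: idxA_def)

lemma S_nonneg: "0 \<le> Re (\<Sum>j\<in>idxA N. \<Sum>j'\<in>idxA N. R j j')"
proof -
  have "0 \<le> (\<Sum>m\<in>idxM N. Re (qf (idxAM N) X (pv N m) (pv N m)))"
    by (intro sum_nonneg psd_qf_nonneg[OF psdX])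
  also have "\<dots> = Re (\<Sum>j\<in>idxA N. \<Sum>j'\<in>idxA N. R j j')" by (simp flip: F1)
  finally show ?thesis .
qed

lemma G_nonneg: "0 \<le> Re (\<Sum>m\<in>idxM N. \<Sum>j\<in>idxA N. \<Sum>k\<in>idxA N. qf (idxAM N) X (dv m j k) (dv m j k))"
  unfolding Re_sum by (intro sum_nonneg psd_qf_nonneg[OF psdX])

lemma S_le: "Re (\<Sum>j\<in>idxA N. \<Sum>j'\<in>idxA N. R j j') \<le> of_nat N"
  using G_nonneg unfolding F2 by simp

lemma P_bound: "(\<Sum>m\<in>idxA N. Re (qf (idxAM N) X (pv N m) (pv N m))) \<le> Re (\<Sum>j\<in>idxA N. \<Sum>j'\<in>idxA N. R j j')"
proof -
  have "(\<Sum>m\<in>idxA N. Re (qf (idxAM N) X (pv N m) (pv N m))) \<le> (\<Sum>m\<in>idxM N. Re (qf (idxAM N) X (pv N m) (pv N m)))"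
    by (intro sum_mono2) (auto simp: idxA_sub psd_qf_nonneg[OF psdX])
  also have "\<dots> = Re (\<Sum>j\<in>idxA N. \<Sum>j'\<in>idxA N. R j j')" by (simp flip: F1)
  finally show ?thesis .
qed


lemma r_single:
  assumes m: "m \<in> idxA N"
  shows "Re (qf (idxAM N) X (rv N m) (rv N m)) \<le> (real N - 1) / (real N)^2 * (\<Sum>k\<in>idxA N. Re (qf (idxAM N) X (dv m m k) (dv m m k)))"
proof -
  have "qf (idxAM N) X (rv N m) (rv N m) = complex_of_real (1 / (real N)^2) * qf (idxAM N) X (\<lambda>x. \<Sum>k\<in>idxA N - {m}. dv m m k x) (\<lambda>x. \<Sum>k\<in>idxA N - {m}. dv m m k x)"
    unfolding rv_def qf_scale_left qf_scale_right by (simp add: power2_eq_square)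
  then have "Re (qf (idxAM N) X (rv N m) (rv N m)) = (1 / (real N)^2) * Re (qf (idxAM N) X (\<lambda>x. \<Sum>k\<in>idxA N - {m}. dv m m k x) (\<lambda>x. \<Sum>k\<in>idxA N - {m}. dv m m k x))"
    by simp
  also have "\<dots> \<le> (1 / (real N)^2) * (real (card (idxA N - {m})) * (\<Sum>k\<in>idxA N - {m}. Re (qf (idxAM N) X (dv m m k) (dv m m k))))"
    by (intro mult_left_mono psd_sum_bound[OF psdX]) auto
  also have "real (card (idxA N - {m})) = real N - 1" using m N1 by (simp add: cardA)
  also have "(\<Sum>k\<in>idxA N - {m}. Re (qf (idxAM N) X (dv m m k) (dv m m k))) \<le> (\<Sum>k\<in>idxA N. Re (qf (idxAM N) X (dv m m k) (dv m m k)))"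
    by (intro sum_mono2) (auto simp: psd_qf_nonneg[OF psdX])
  then have "(1 / (real N)^2) * ((real N - 1) * (\<Sum>k\<in>idxA N - {m}. Re (qf (idxAM N) X (dv m m k) (dv m m k))))
     \<le> (1 / (real N)^2) * ((real N - 1) * (\<Sum>k\<in>idxA N. Re (qf (idxAM N) X (dv m m k) (dv m m k))))"
    using N1 by (intro mult_left_mono) auto
  finally show ?thesis by simp
qed

lemma row_le:
  assumes m: "m \<in> idxA N"
  shows "2 * (\<Sum>k\<in>idxA N. Re (qf (idxAM N) X (dv m m k) (dv m m k))) \<le> (\<Sum>j\<in>idxA N. \<Sum>k\<in>idxA N. Re (qf (idxAM N) X (dv m j k) (dv m j k)))"
proof -
  define g where "g j k = Re (qf (idxAM N) X (dv m j k) (dv m j k))" for j k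
  have g0: "g j k \<ge> 0" for j k unfolding g_def by (rule psd_qf_nonneg[OF psdX])
  have gs: "g j k = g k j" for j k unfolding g_def dv_def by (subst qf_ind_diff_sym) (rule refl)
  have gmm: "g m m = 0" unfolding g_def dv_def by (simp add: qf_def)
  have h1: "(\<Sum>j\<in>idxA N. \<Sum>k\<in>idxA N. g j k) = (\<Sum>k\<in>idxA N. g m k) + (\<Sum>j\<in>idxA N - {m}. \<Sum>k\<in>idxA N. g j k)"
    using m by (intro sum.remove) auto
  have h2: "(\<Sum>j\<in>idxA N - {m}. \<Sum>k\<in>idxA N. g j k) \<ge> (\<Sum>j\<in>idxA N - {m}. g j m)"
    using m by (intro sum_mono member_le_sum) (auto simp: g0)
  have h3: "(\<Sum>j\<in>idxA N - {m}. g j m) = (\<Sum>j\<in>idxA N. g j m)"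
    using sum.remove[of "idxA N" m "\<lambda>j. g j m"] m gmm by simp
  have h4: "(\<Sum>j\<in>idxA N. g j m) = (\<Sum>k\<in>idxA N. g m k)" by (simp add: gs)
  from h1 h2 h3 h4 have "2 * (\<Sum>k\<in>idxA N. g m k) \<le> (\<Sum>j\<in>idxA N. \<Sum>k\<in>idxA N. g j k)" by linarith
  then show ?thesis unfolding g_def by simp
qed

lemma R_bound: "(\<Sum>m\<in>idxA N. Re (qf (idxAM N) X (rv N m) (rv N m)))
   \<le> (real N - 1) / real N * (1 - Re (\<Sum>j\<in>idxA N. \<Sum>j'\<in>idxA N. R j j') / real N)"
proof -
  define G where "G m = (\<Sum>j\<in>idxA N. \<Sum>k\<in>idxA N. Re (qf (idxAM N) X (dv m j k) (dv m j k)))" for m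
  have G0: "G m \<ge> 0" for m unfolding G_def by (intro sum_nonneg psd_qf_nonneg[OF psdX])
  have "(\<Sum>m\<in>idxA N. Re (qf (idxAM N) X (rv N m) (rv N m))) \<le> (\<Sum>m\<in>idxA N. (real N - 1) / (real N)^2 * (G m / 2))"
  proof (intro sum_mono order.trans[OF r_single])
    fix m assume m: "m \<in> idxA N"
    show "(real N - 1) / (real N)\<^sup>2 * (\<Sum>k\<in>idxA N. Re (qf (idxAM N) X (dv m m k) (dv m m k))) \<le> (real N - 1) / (real N)\<^sup>2 * (G m / 2)"
      using row_le[OF m] N1 unfolding G_def by (intro mult_left_mono) auto
  qed
  also have "\<dots> = (real N - 1) / (real N)^2 / 2 * (\<Sum>m\<in>idxA N. G m)"
    by (simp add: sum_distrib_left)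
  finally have c1: "(\<Sum>m\<in>idxA N. Re (qf (idxAM N) X (rv N m) (rv N m))) \<le> (real N - 1) / (real N)^2 / 2 * (\<Sum>m\<in>idxA N. G m)" .
  have c2: "(\<Sum>m\<in>idxA N. G m) \<le> (\<Sum>m\<in>idxM N. G m)"
    by (intro sum_mono2) (auto simp: idxA_sub G0)
  have c3: "(\<Sum>m\<in>idxM N. G m) = 2 * real N - 2 * Re (\<Sum>j\<in>idxA N. \<Sum>j'\<in>idxA N. R j j')"
    using arg_cong[OF F2, of Re] unfolding G_def by simp
  have c0: "0 \<le> (real N - 1) / (real N)^2 / 2" using N1 by simp
  have "(\<Sum>m\<in>idxA N. Re (qf (idxAM N) X (rv N m) (rv N m))) \<le> (real N - 1) / (real N)^2 / 2 * (2 * real N - 2 * Re (\<Sum>j\<in>idxA N. \<Sum>j'\<in>idxA N. R j j'))"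
    using c1 mult_left_mono[OF c2 c0] unfolding c3 by linarith
  moreover have "(real N - 1) / (real N)^2 / 2 * (2 * real N - 2 * Re (\<Sum>j\<in>idxA N. \<Sum>j'\<in>idxA N. R j j'))
     = (real N - 1) / real N * (1 - Re (\<Sum>j\<in>idxA N. \<Sum>j'\<in>idxA N. R j j') / real N)"
    using N1 by (simp add: field_simps power2_eq_square)
  ultimately show ?thesis by simp
qed


lemma rv_eq: "m \<in> idxA N \<Longrightarrow> rv N m x = ind (m,m) x - complex_of_real (1 / real N) * pv N m x"
proof -
  assume m: "m \<in> idxA N"
  have "pv N m x = ind (m,m) x + (\<Sum>k\<in>idxA N - {m}. ind (k,m) x)"
    unfolding pv_def using m by (intro sum.remove) auto
  moreover have "(\<Sum>k\<in>idxA N - {m}. dv m m k x) = of_nat (N - 1) * ind (m,m) x - (\<Sum>k\<in>idxA N - {m}. ind (k,m) x)"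
    using m by (simp add: dv_def sum_subtractf cardA)
  ultimately show ?thesis using N1 unfolding rv_def
    by (simp add: field_simps of_nat_diff)
qed

lemma qf_ind_pv: "m \<in> idxA N \<Longrightarrow> qf (idxAM N) X (ind (m,m)) (pv N m) = (\<Sum>j\<in>idxA N. X (m,m) (j,m))"
  unfolding pv_def by (simp add: qf_sum_right qf_ind mem_idxAM idxA_sub)

lemma qf_pv_ind: "m \<in> idxA N \<Longrightarrow> qf (idxAM N) X (pv N m) (ind (m,m)) = (\<Sum>j\<in>idxA N. X (j,m) (m,m))"
  unfolding pv_def by (simp add: qf_sum_left qf_ind mem_idxAM idxA_sub)

lemma cross_id:
  assumes m: "m \<in> idxA N"
  shows "qf (idxAM N) X (rv N m) (\<lambda>x. \<i> * pv N m x) + qf (idxAM N) X (\<lambda>x. \<i> * pv N m x) (rv N m)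
     = \<i> * (qf (idxAM N) X (ind (m,m)) (pv N m) - qf (idxAM N) X (pv N m) (ind (m,m)))"
proof -
  have e: "qf (idxAM N) X (rv N m) w = qf (idxAM N) X (\<lambda>x. ind (m,m) x - complex_of_real (1 / real N) * pv N m x) w"
    "qf (idxAM N) X w (rv N m) = qf (idxAM N) X w (\<lambda>x. ind (m,m) x - complex_of_real (1 / real N) * pv N m x)" for w
    by (intro qf_cong refl; simp add: rv_eq m)+
  show ?thesis unfolding e qf_diff_left qf_diff_right qf_scale_left qf_scale_right
    by (simp add: algebra_simps)
qed

lemma W_id: "(\<Sum>m\<in>idxA N. qf (idxAM N) X (ind (m,m)) (pv N m) - qf (idxAM N) X (pv N m) (ind (m,m)))
   = (\<Sum>j\<in>idxA N. \<Sum>j'\<in>idxA N. X (j,j) (j',j) - X (j,j') (j',j'))"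
proof -
  have "(\<Sum>m\<in>idxA N. qf (idxAM N) X (ind (m,m)) (pv N m) - qf (idxAM N) X (pv N m) (ind (m,m)))
     = (\<Sum>m\<in>idxA N. \<Sum>j\<in>idxA N. X (m,m) (j,m)) - (\<Sum>m\<in>idxA N. \<Sum>j\<in>idxA N. X (j,m) (m,m))"
    by (simp add: sum_subtractf qf_ind_pv qf_pv_ind)
  also have "(\<Sum>m\<in>idxA N. \<Sum>j\<in>idxA N. X (j,m) (m,m)) = (\<Sum>j\<in>idxA N. \<Sum>m\<in>idxA N. X (j,m) (m,m))"
    by (rule sum.swap)
  finally show ?thesis by (simp add: sum_subtractf)
qed

lemma deriv_bound:
  fixes f fd :: real
  defines "f \<equiv> Re (\<Sum>j\<in>idxA N. \<Sum>j'\<in>idxA N. R j j') / real N"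
    and "fd \<equiv> Re (complex_of_real (1 / real N) * (\<Sum>j\<in>idxA N. \<Sum>j'\<in>idxA N.
            - \<i> * (complex_of_real pi * (X (j,j) (j',j) - X (j,j') (j',j')))))"
  assumes f0: "0 < f" and f1: "f < 1"
  shows "\<bar>fd\<bar> \<le> 2 * (pi * sqrt (real N - 1) / real N) * sqrt f * sqrt (1 - f)"
proof -
  define W where "W = (\<Sum>j\<in>idxA N. \<Sum>j'\<in>idxA N. X (j,j) (j',j) - X (j,j') (j',j'))"
  have fdW: "fd = pi / real N * Im W"
  proof -
    have "(\<Sum>j\<in>idxA N. \<Sum>j'\<in>idxA N. - \<i> * (complex_of_real pi * (X (j,j) (j',j) - X (j,j') (j',j'))))
        = - \<i> * complex_of_real pi * W"
      unfolding W_def by (simp add: sum_distrib_left mult.assoc)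
    then show ?thesis unfolding fd_def by simp
  qed
  define Rs where "Rs = (\<Sum>m\<in>idxA N. Re (qf (idxAM N) X (rv N m) (rv N m)))"
  define Ps where "Ps = (\<Sum>m\<in>idxA N. Re (qf (idxAM N) X (pv N m) (pv N m)))"
  have sumcross: "(\<Sum>m\<in>idxA N. Re (qf (idxAM N) X (rv N m) (\<lambda>x. \<i> * pv N m x) + qf (idxAM N) X (\<lambda>x. \<i> * pv N m x) (rv N m)))
      = - Im W"
  proof -
    have "(\<Sum>m\<in>idxA N. qf (idxAM N) X (rv N m) (\<lambda>x. \<i> * pv N m x) + qf (idxAM N) X (\<lambda>x. \<i> * pv N m x) (rv N m))
       = \<i> * W"
      unfolding W_def by (simp add: cross_id W_id flip: sum_distrib_left)
    then show ?thesis by (metis Re_sum Re_i_times)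
  qed
  have ipp: "qf (idxAM N) X (\<lambda>x. \<i> * pv N m x) (\<lambda>x. \<i> * pv N m x) = qf (idxAM N) X (pv N m) (pv N m)" for m
    by (simp add: qf_scale_left qf_scale_right)
  have ab: "a * b * (- Im W) \<le> a^2 * Rs + b^2 * Ps" for a b :: real
  proof -
    have "a * b * (- Im W) = (\<Sum>m\<in>idxA N. a * b * Re (qf (idxAM N) X (rv N m) (\<lambda>x. \<i> * pv N m x) + qf (idxAM N) X (\<lambda>x. \<i> * pv N m x) (rv N m)))"
      by (simp only: sumcross flip: sum_distrib_left)
    also have "\<dots> \<le> (\<Sum>m\<in>idxA N. a^2 * Re (qf (idxAM N) X (rv N m) (rv N m)) + b^2 * Re (qf (idxAM N) X (pv N m) (pv N m)))"
      by (intro sum_mono) (metis psd_cross_ab[OF psdX] ipp)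
    finally show ?thesis by (simp add: Rs_def Ps_def sum.distrib sum_distrib_left)
  qed
  have Rs_le: "Rs \<le> (real N - 1) / real N * (1 - f)" unfolding Rs_def f_def by (rule R_bound)
  have Ps_le: "Ps \<le> real N * f" unfolding Ps_def f_def using P_bound N1 by simp
  have ab2: "a * b * \<bar>Im W\<bar> \<le> a^2 * ((real N - 1) / real N * (1 - f)) + b^2 * (real N * f)" if "a \<ge> 0" "b \<ge> 0" for a b :: real
  proof -
    have "a * b * \<bar>Im W\<bar> \<le> a^2 * Rs + b^2 * Ps"
      using ab[of a b] ab[of a "-b"] by (cases "Im W \<ge> 0") auto
    also have "\<dots> \<le> a^2 * ((real N - 1) / real N * (1 - f)) + b^2 * (real N * f)"
      by (intro add_mono mult_left_mono Rs_le Ps_le) auto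
    finally show ?thesis .
  qed
  define a where "a = sqrt (real N * f)"
  define b where "b = sqrt ((real N - 1) / real N * (1 - f))"
  have a0: "a > 0" and b0: "b > 0" unfolding a_def b_def using N1 f0 f1 by auto
  have "a^2 * ((real N - 1) / real N * (1 - f)) + b^2 * (real N * f) = 2 * (a * b)^2"
    unfolding a_def b_def using N1 f0 f1 by (simp add: power_mult_distrib)
  with ab2[of a b] a0 b0 have "a * b * \<bar>Im W\<bar> \<le> (a * b) * (2 * (a * b))" by (simp add: power2_eq_square)
  then have IW: "\<bar>Im W\<bar> \<le> 2 * (a * b)" using a0 b0 by simp
  have abeq: "a * b = sqrt (real N - 1) * sqrt f * sqrt (1 - f)"
    unfolding a_def b_def using N1 by (simp add: real_sqrt_mult real_sqrt_divide)
  have "\<bar>fd\<bar> = pi / real N * \<bar>Im W\<bar>" unfolding fdW by (simp add: abs_mult)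
  also have "\<dots> \<le> pi / real N * (2 * (a * b))" by (intro mult_left_mono IW) auto
  finally show ?thesis unfolding abeq by (simp add: field_simps)
qed

end



lemma angle_lemma:
  fixes f fd :: "real \<Rightarrow> real" and T w c :: real
  assumes T0: "T \<ge> 0" and w0: "w > 0"
    and deriv: "\<And>t. t \<in> {0..T} \<Longrightarrow> (f has_real_derivative fd t) (at t within {0..T})"
    and rng: "\<And>t. t \<in> {0..T} \<Longrightarrow> 0 \<le> f t \<and> f t \<le> 1"
    and bnd: "\<And>t. t \<in> {0..T} \<Longrightarrow> 0 < f t \<Longrightarrow> f t < 1 \<Longrightarrow> \<bar>fd t\<bar> \<le> 2 * w * sqrt (f t) * sqrt (1 - f t)"
    and f0: "f 0 = 1" and fT: "f T \<le> c" and c0: "0 < c" and c1: "c < 1"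
  shows "arccos (sqrt c) \<le> w * T"
proof -
  have cont: "continuous_on {0..T} f"
    unfolding continuous_on_eq_continuous_within using deriv DERIV_continuous by blast
  define S1 where "S1 = {t \<in> {0..T}. f t \<le> c}"
  have S1c: "closed S1" unfolding S1_def
    by (rule continuous_on_closed_Collect_le[OF cont continuous_on_const]) simp
  have S1ne: "T \<in> S1" unfolding S1_def using T0 fT by auto
  have S1b: "bdd_below S1" unfolding S1_def by (rule bdd_belowI[of _ 0]) auto
  define t1 where "t1 = Inf S1"
  have t1S: "t1 \<in> S1" unfolding t1_def using closed_contains_Inf[OF _ S1b S1c] S1ne by blast
  have t1T: "0 \<le> t1" "t1 \<le> T" and ft1: "f t1 \<le> c" using t1S unfolding S1_def by auto
  have below: "f t > c" if "0 \<le> t" "t < t1" for t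
  proof (rule ccontr)
    assume "\<not> f t > c"
    then have "t \<in> S1" unfolding S1_def using that t1T by auto
    then have "t1 \<le> t" unfolding t1_def by (rule cInf_lower[OF _ S1b])
    with that show False by simp
  qed
  define S0 where "S0 = {t \<in> {0..t1}. 1 \<le> f t}"
  have cont1: "continuous_on {0..t1} f" by (rule continuous_on_subset[OF cont]) (use t1T in auto)
  have S0c: "closed S0" unfolding S0_def
    by (rule continuous_on_closed_Collect_le[OF continuous_on_const cont1]) simp
  have S0ne: "0 \<in> S0" unfolding S0_def using t1T f0 by auto
  have S0b: "bdd_above S0" unfolding S0_def by (rule bdd_aboveI[of _ t1]) auto
  define t0 where "t0 = Sup S0"
  have t0S: "t0 \<in> S0" unfolding t0_def using closed_contains_Sup[OF _ S0b S0c] S0ne by blast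
  have t0t1: "0 \<le> t0" "t0 \<le> t1" and ft0: "1 \<le> f t0" using t0S unfolding S0_def by auto
  have ft0': "f t0 = 1" using ft0 rng[of t0] t0t1 t1T by auto
  have above: "f t < 1" if "t0 < t" "t \<le> t1" for t
  proof (rule ccontr)
    assume "\<not> f t < 1"
    then have "t \<in> S0" unfolding S0_def using that t0t1 by auto
    then have "t \<le> t0" unfolding t0_def by (rule cSup_upper[OF _ S0b])
    with that show False by simp
  qed
  have lt: "t0 < t1" using t0t1 ft0 ft1 c1 by (cases "t0 = t1") auto
  define u where "u t = arccos (sqrt (f t))" for t
  define ud where "ud t = inverse (- sqrt (1 - (sqrt (f t))\<^sup>2)) * (inverse (sqrt (f t)) / 2 * fd t)" for t
  have rng': "-1 \<le> sqrt (f t) \<and> sqrt (f t) \<le> 1" if "t \<in> {t0..t1}" for t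
  proof -
    have "0 \<le> f t" "f t \<le> 1" using rng[of t] that t0t1 t1T by auto
    then show ?thesis by (smt (verit) real_sqrt_ge_zero real_sqrt_le_1_iff)
  qed
  have ucont: "continuous_on {t0..t1} u" unfolding u_def
    using t0t1 t1T rng'
    by (intro continuous_intros continuous_on_subset[OF cont]) auto
  have uder: "(u has_derivative (\<lambda>h. h * ud x)) (at x)" if x: "t0 < x" "x < t1" for x
  proof -
    have xi: "x \<in> interior {0..T}" using x t0t1 t1T by auto
    have fx: "0 < f x" "f x < 1" using below[of x] above[of x] x t0t1 c0 by auto
    have d: "(f has_real_derivative fd x) (at x)"
      using deriv[of x] xi at_within_interior[OF xi] interior_subset by fastforce
    have "(u has_real_derivative ud x) (at x)" unfolding u_def ud_def
      using fx
      by (intro DERIV_chain2[of arccos] DERIV_chain2[of sqrt] d DERIV_arccos DERIV_real_sqrt)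
        (auto, smt (verit) real_sqrt_gt_zero)
    then have "(u has_derivative (*) (ud x)) (at x)" by (simp add: has_field_derivative_def)
    moreover have "(*) (ud x) = (\<lambda>h. h * ud x)" by (auto simp: mult.commute)
    ultimately show ?thesis by simp
  qed
  obtain xi where xi: "xi \<in> {t0<..<t1}" and mv: "norm (u t1 - u t0) \<le> norm ((t1 - t0) * ud xi)"
    using mvt_general[OF lt ucont uder] by auto
  have fxi: "0 < f xi" "f xi < 1" "xi \<in> {0..T}" using below[of xi] above[of xi] xi t0t1 t1T c0 by auto
  have udb: "\<bar>ud xi\<bar> \<le> w"
  proof -
    have s: "(sqrt (f xi))\<^sup>2 = f xi" using fxi by simp
    have pos: "0 < sqrt (f xi) * sqrt (1 - f xi)" using fxi by simp
    have "\<bar>ud xi\<bar> = \<bar>fd xi\<bar> / (2 * (sqrt (f xi) * sqrt (1 - f xi)))"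
      unfolding ud_def s using fxi by (simp add: abs_mult field_simps)
    also have "\<dots> \<le> (2 * w * sqrt (f xi) * sqrt (1 - f xi)) / (2 * (sqrt (f xi) * sqrt (1 - f xi)))"
      by (intro divide_right_mono bnd fxi) (use pos in auto)
    also have "\<dots> = w" using pos fxi by simp
    finally show ?thesis .
  qed
  have "u t1 - u t0 \<le> (t1 - t0) * w"
    using mv udb lt by (simp add: abs_mult) (meson abs_ge_self mult_left_mono order.trans less_imp_le diff_ge_0_iff_ge)
  also have "\<dots> \<le> T * w" using t0t1 t1T w0 by (intro mult_right_mono) auto
  finally have "u t1 - u t0 \<le> w * T" by (simp add: mult.commute)
  moreover have "u t0 = 0" unfolding u_def ft0' by simp
  moreover have "arccos (sqrt c) \<le> u t1" unfolding u_def
    using ft1 rng[of t1] t1T c1 by (intro arccos_le_arccos) (auto simp: real_sqrt_le_1_iff, smt (verit) real_sqrt_ge_zero)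
  ultimately show ?thesis by simp
qed


lemma lin_nonneg:
  fixes \<alpha> \<beta> :: real
  assumes "\<And>r. 0 \<le> r * \<alpha> + \<beta>"
  shows "\<alpha> = 0"
proof (rule ccontr)
  assume a: "\<alpha> \<noteq> 0"
  have "0 \<le> (-(\<bar>\<beta>\<bar> + 1) / \<alpha>) * \<alpha> + \<beta>" by (rule assms)
  also have "\<dots> = \<beta> - \<bar>\<beta>\<bar> - 1" using a by simp
  finally show False by simp
qed

lemma psd_zero_add:
  assumes psd: "psd_op I X" and w0: "Re (qf I X w w) = 0"
  shows "Re (qf I X (\<lambda>x. v x + w x) (\<lambda>x. v x + w x)) = Re (qf I X v v)"
proof -
  have "- Re (qf I X v w + qf I X w v) = 0"
  proof (rule lin_nonneg[where \<beta> = "Re (qf I X v v)"])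
    fix r :: real
    have "1 * r * Re (qf I X v w + qf I X w v) \<le> 1^2 * Re (qf I X v v) + r^2 * Re (qf I X w w)"
      by (rule psd_cross_ab[OF psd])
    then have "r * Re (qf I X v w + qf I X w v) \<le> Re (qf I X v v)" using w0 by simp
    then show "0 \<le> r * (- Re (qf I X v w + qf I X w v)) + Re (qf I X v v)" by (simp add: algebra_simps)
  qed
  then show ?thesis using w0 by (simp add: qf_add_left qf_add_right)
qed

lemma psd_zero_sum:
  assumes psd: "psd_op I X" and K: "finite K" and z: "\<And>k. k \<in> K \<Longrightarrow> Re (qf I X (d k) (d k)) = 0"
  shows "Re (qf I X (\<lambda>x. \<Sum>k\<in>K. d k x) (\<lambda>x. \<Sum>k\<in>K. d k x)) = 0"
  using psd_sum_bound[OF psd K, of d] psd_qf_nonneg[OF psd, of "\<lambda>x. \<Sum>k\<in>K. d k x"] z by simp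

lemma psi0_prod: "N > 0 \<Longrightarrow> psi0 N j * cnj (psi0 N j') = complex_of_real (1 / real N)"
  unfolding psi0_def by (simp flip: of_real_mult)

lemma op_trace_Pi:
  assumes "x \<in> idxA N"
  shows "op_trace (idxAM N) (op_mult (idxAM N) (groverPi N x) Y) = of_nat N * Y (x,x) (x,x)"
proof -
  have xx: "(x,x) \<in> idxAM N" using assms by (simp add: mem_idxAM idxA_sub)
  have "op_trace (idxAM N) (op_mult (idxAM N) (groverPi N x) Y) = (\<Sum>a\<in>idxAM N. \<Sum>c\<in>idxAM N. groverPi N x a c * Y c a)"
    unfolding op_trace_def op_mult_def ..
  also have "\<dots> = (\<Sum>a\<in>idxAM N. if a = (x,x) then of_nat N * Y (x,x) (x,x) else 0)"
  proof (rule sum.cong[OF refl])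
    fix a assume "a \<in> idxAM N"
    have "(\<Sum>c\<in>idxAM N. groverPi N x a c * Y c a) = (\<Sum>c\<in>idxAM N. if c = (x,x) then groverPi N x a (x,x) * Y (x,x) a else 0)"
      by (rule sum.cong[OF refl]) (auto simp: groverPi_def split: prod.splits)
    also have "\<dots> = groverPi N x a (x,x) * Y (x,x) a" using xx by simp
    finally show "(\<Sum>c\<in>idxAM N. groverPi N x a c * Y c a) = (if a = (x,x) then of_nat N * Y (x,x) (x,x) else 0)"
      by (auto simp: groverPi_def split: prod.splits)
  qed
  also have "\<dots> = of_nat N * Y (x,x) (x,x)" using xx by simp
  finally show ?thesis .
qed


lemma cardA0: "card (idxA N) = N" by (simp add: idxA_def)

lemma diag_nonneg: "psd_op (idxAM N) Y \<Longrightarrow> a \<in> idxAM N \<Longrightarrow> 0 \<le> Re (Y a a)"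
  using psd_qf_nonneg[of "idxAM N" Y "ind a"] qf_ind[of "idxAM N" a a Y] by simp

lemma fT_bound:
  assumes N1: "N > 1" and psdY: "psd_op (idxAM N) Y"
    and ptrY: "\<And>j j'. j \<in> idxA N \<Longrightarrow> j' \<in> idxA N \<Longrightarrow> ptrace2 (idxM N) Y j j' = R j j'"
    and diagR: "\<And>j. j \<in> idxA N \<Longrightarrow> R j j = 1 / of_nat N"
    and succ: "\<And>x. x \<in> idxA N \<Longrightarrow> 1 \<le> Re (of_nat N * Y (x,x) (x,x))"
  shows "Re (\<Sum>j\<in>idxA N. \<Sum>j'\<in>idxA N. R j j') \<le> 1"
proof -
  define d where "d j m = Re (Y (j,m) (j,m))" for j m
  have d0: "0 \<le> d j m" if "j \<in> idxA N" "m \<in> idxM N" for j m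
    unfolding d_def using diag_nonneg[OF psdY mem_idxAM[OF that]] .
  have tot: "(\<Sum>j\<in>idxA N. \<Sum>m\<in>idxM N. d j m) = 1"
  proof -
    have "(\<Sum>j\<in>idxA N. \<Sum>m\<in>idxM N. d j m) = (\<Sum>j\<in>idxA N. Re (R j j))"
      by (rule sum.cong[OF refl]) (simp add: d_def ptrY[symmetric] ptrace2_def)
    also have "\<dots> = (\<Sum>j\<in>idxA N. 1 / real N)" by (rule sum.cong[OF refl]) (simp add: diagR)
    also have "\<dots> = 1" using N1 by (simp add: cardA0)
    finally show ?thesis .
  qed
  have split: "(\<Sum>m\<in>idxM N. d j m) = d j j + (\<Sum>m\<in>idxM N - {j}. d j m)" if "j \<in> idxA N" for j
    using that by (intro sum.remove) (auto simp: idxA_sub)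
  have dd: "1 / real N \<le> d x x" if "x \<in> idxA N" for x
    using succ[OF that] N1 unfolding d_def by (simp add: field_simps)
  have "(\<Sum>j\<in>idxA N. 1 / real N) \<le> (\<Sum>j\<in>idxA N. d j j)" by (intro sum_mono dd)
  then have s1: "1 \<le> (\<Sum>j\<in>idxA N. d j j)" using N1 by (simp add: cardA0)
  have "(\<Sum>j\<in>idxA N. \<Sum>m\<in>idxM N. d j m) = (\<Sum>j\<in>idxA N. d j j) + (\<Sum>j\<in>idxA N. \<Sum>m\<in>idxM N - {j}. d j m)"
    by (simp add: split sum.distrib)
  then have s2: "(\<Sum>j\<in>idxA N. \<Sum>m\<in>idxM N - {j}. d j m) \<le> 0" using tot s1 by linarith
  have nn: "\<forall>j\<in>idxA N. 0 \<le> (\<Sum>m\<in>idxM N - {j}. d j m)" using d0 by (auto intro!: sum_nonneg)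
  have "0 \<le> (\<Sum>j\<in>idxA N. \<Sum>m\<in>idxM N - {j}. d j m)" using nn by (simp add: sum_nonneg)
  then have "(\<Sum>j\<in>idxA N. \<Sum>m\<in>idxM N - {j}. d j m) = 0" using s2 by linarith
  then have z1: "\<forall>j\<in>idxA N. (\<Sum>m\<in>idxM N - {j}. d j m) = 0"
    using nn sum_nonneg_eq_0_iff[of "idxA N" "\<lambda>j. \<Sum>m\<in>idxM N - {j}. d j m"] by simp
  have zero: "Re (Y (j,m) (j,m)) = 0" if "j \<in> idxA N" "m \<in> idxM N" "m \<noteq> j" for j m
  proof -
    have "(\<Sum>m\<in>idxM N - {j}. d j m) = 0" using z1 that by blast
    then have "\<forall>m\<in>idxM N - {j}. d j m = 0"
      using sum_nonneg_eq_0_iff[of "idxM N - {j}" "d j"] d0 that by auto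
    then show ?thesis using that unfolding d_def by auto
  qed
  have zq: "Re (qf (idxAM N) Y (ind (j,m)) (ind (j,m))) = 0" if "j \<in> idxA N" "m \<in> idxM N" "m \<noteq> j" for j m
    using zero[OF that] qf_ind[of "idxAM N" "(j,m)" "(j,m)" Y] mem_idxAM[OF that(1,2)] by simp
  have pm: "Re (qf (idxAM N) Y (pv N m) (pv N m)) = (if m \<in> idxA N then Re (Y (m,m) (m,m)) else 0)" if m: "m \<in> idxM N" for m
  proof (cases "m \<in> idxA N")
    case True
    have "qf (idxAM N) Y (pv N m) (pv N m) = qf (idxAM N) Y (\<lambda>x. ind (m,m) x + (\<Sum>j\<in>idxA N - {m}. ind (j,m) x)) (\<lambda>x. ind (m,m) x + (\<Sum>j\<in>idxA N - {m}. ind (j,m) x))"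
      unfolding pv_def using True by (intro qf_cong; intro sum.remove) auto
    also have "Re \<dots> = Re (qf (idxAM N) Y (ind (m,m)) (ind (m,m)))"
      by (intro psd_zero_add[OF psdY] psd_zero_sum[OF psdY]) (use zq m in auto)
    also have "\<dots> = Re (Y (m,m) (m,m))" using True m by (simp add: qf_ind mem_idxAM)
    finally show ?thesis using True by simp
  next
    case False
    have "Re (qf (idxAM N) Y (pv N m) (pv N m)) = 0" unfolding pv_def
      by (intro psd_zero_sum[OF psdY]) (use zq m False in auto)
    then show ?thesis using False by simp
  qed
  have "Re (\<Sum>j\<in>idxA N. \<Sum>j'\<in>idxA N. R j j') = (\<Sum>m\<in>idxM N. Re (qf (idxAM N) Y (pv N m) (pv N m)))"
    using arg_cong[OF F1[OF N1 psdY ptrY diagR], of Re] by (simp only: Re_sum)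
  also have "\<dots> = (\<Sum>m\<in>idxM N. if m \<in> idxA N then Re (Y (m,m) (m,m)) else 0)"
    by (rule sum.cong[OF refl]) (rule pm)
  also have "\<dots> = (\<Sum>m\<in>idxA N. d m m)"
    by (simp add: sum.inter_restrict[symmetric] d_def Int_absorb1 idxA_sub subsetI)
  also have "\<dots> \<le> (\<Sum>j\<in>idxA N. \<Sum>m\<in>idxM N. d j m)"
    by (intro sum_mono member_le_sum) (auto simp: idxA_sub d0)
  finally show ?thesis using tot by simp
qed



lemma lower:
  assumes N1: "N > 1" and P: "grover_protocol N T 1 \<rho> \<rho>t \<rho>'"
  shows "1 / pi * real N / sqrt (real N - 1) * arccos (1 / sqrt (real N)) \<le> T"
proof -
  have T0: "0 \<le> T" and psdt: "\<And>t. t \<in> {0..T} \<Longrightarrow> psd_op (idxAM N) (\<rho>t t)"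
    and psd': "psd_op (idxAM N) \<rho>'"
    and init: "\<And>j j'. j \<in> idxA N \<Longrightarrow> j' \<in> idxA N \<Longrightarrow> \<rho> 0 j j' = psi0 N j * cnj (psi0 N j')"
    and ptr: "\<And>t j j'. t \<in> {0..T} \<Longrightarrow> j \<in> idxA N \<Longrightarrow> j' \<in> idxA N \<Longrightarrow> ptrace2 (idxM N) (\<rho>t t) j j' = \<rho> t j j'"
    and der: "\<And>t j j'. t \<in> {0..T} \<Longrightarrow> j \<in> idxA N \<Longrightarrow> j' \<in> idxA N \<Longrightarrow>
        ((\<lambda>s. \<rho> s j j') has_vector_derivative
           (- \<i> * ptrace2 (idxM N)
               (\<lambda>a b. op_mult (idxAM N) (groverH N) (\<rho>t t) a b
                      - op_mult (idxAM N) (\<rho>t t) (groverH N) a b) j j'))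
         (at t within {0..T})"
    and fin: "\<And>j j'. j \<in> idxA N \<Longrightarrow> j' \<in> idxA N \<Longrightarrow> ptrace2 (idxM N) \<rho>' j j' = \<rho> T j j'"
    and succ: "\<And>x. x \<in> idxA N \<Longrightarrow> 1 \<le> Re (op_trace (idxAM N) (op_mult (idxAM N) (groverPi N x) \<rho>'))"
    using P unfolding grover_protocol_def by blast+
  define D where "D t j j' = - \<i> * (complex_of_real pi * (\<rho>t t (j,j) (j',j) - \<rho>t t (j,j') (j',j')))" for t j j'
  have der': "((\<lambda>s. \<rho> s j j') has_vector_derivative D t j j') (at t within {0..T})"
    if "t \<in> {0..T}" "j \<in> idxA N" "j' \<in> idxA N" for t j j'
    using der[OF that] unfolding ptrace_comm[OF that(2,3)] D_def .
  have diag: "\<rho> t j j = 1 / of_nat N" if t: "t \<in> {0..T}" and j: "j \<in> idxA N" for t j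
  proof -
    have "\<exists>c. \<forall>x\<in>{0..T}. \<rho> x j j = c"
    proof (rule has_derivative_zero_constant)
      fix x assume x: "x \<in> {0..T}"
      have "((\<lambda>s. \<rho> s j j) has_vector_derivative 0) (at x within {0..T})"
        using der'[OF x j j] by (simp add: D_def)
      then show "((\<lambda>s. \<rho> s j j) has_derivative (\<lambda>h. 0)) (at x within {0..T})"
        by (simp add: has_vector_derivative_def)
    qed simp
    then obtain c where c: "\<forall>x\<in>{0..T}. \<rho> x j j = c" by blast
    have "\<rho> t j j = \<rho> 0 j j" using c t T0 by auto
    also have "\<dots> = 1 / of_nat N" using init[OF j j] psi0_prod[of N j j] N1 by simp
    finally show ?thesis .
  qed
  define f where "f t = Re (complex_of_real (1 / real N) * (\<Sum>j\<in>idxA N. \<Sum>j'\<in>idxA N. \<rho> t j j'))" for t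
  define fd where "fd t = Re (complex_of_real (1 / real N) * (\<Sum>j\<in>idxA N. \<Sum>j'\<in>idxA N. D t j j'))" for t
  have fder: "(f has_real_derivative fd t) (at t within {0..T})" if t: "t \<in> {0..T}" for t
  proof -
    have "((\<lambda>s. \<Sum>j\<in>idxA N. \<Sum>j'\<in>idxA N. \<rho> s j j') has_vector_derivative (\<Sum>j\<in>idxA N. \<Sum>j'\<in>idxA N. D t j j')) (at t within {0..T})"
      by (intro has_vector_derivative_sum der'[OF t])
    then have "((\<lambda>s. complex_of_real (1 / real N) * (\<Sum>j\<in>idxA N. \<Sum>j'\<in>idxA N. \<rho> s j j')) has_vector_derivative
        complex_of_real (1 / real N) * (\<Sum>j\<in>idxA N. \<Sum>j'\<in>idxA N. D t j j')) (at t within {0..T})"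
      by (rule bounded_linear.has_vector_derivative[OF bounded_linear_mult_right])
    then show ?thesis unfolding f_def fd_def by (rule has_field_derivative_Re)
  qed
  have fS: "f t = Re (\<Sum>j\<in>idxA N. \<Sum>j'\<in>idxA N. \<rho> t j j') / real N" for t
    unfolding f_def by simp
  have rng: "0 \<le> f t \<and> f t \<le> 1" if t: "t \<in> {0..T}" for t
  proof -
    have a: "0 \<le> Re (\<Sum>j\<in>idxA N. \<Sum>j'\<in>idxA N. \<rho> t j j')"
      by (rule S_nonneg[OF N1 psdt[OF t] ptr[OF t] diag[OF t]])
    have b: "Re (\<Sum>j\<in>idxA N. \<Sum>j'\<in>idxA N. \<rho> t j j') \<le> real N"
      using S_le[OF N1 psdt[OF t] ptr[OF t] diag[OF t]] by simp
    show ?thesis unfolding fS using a b N1 by auto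
  qed
  have bnd: "\<bar>fd t\<bar> \<le> 2 * (pi * sqrt (real N - 1) / real N) * sqrt (f t) * sqrt (1 - f t)"
    if t: "t \<in> {0..T}" and "0 < f t" "f t < 1" for t
    using deriv_bound[OF N1 psdt[OF t] ptr[OF t] diag[OF t]] that unfolding fS fd_def D_def by simp
  have f0: "f 0 = 1"
  proof -
    have "(\<Sum>j\<in>idxA N. \<Sum>j'\<in>idxA N. \<rho> 0 j j') = (\<Sum>j\<in>idxA N. \<Sum>j'\<in>idxA N. complex_of_real (1 / real N))"
      using init psi0_prod[of N] N1 by (intro sum.cong refl) auto
    then show ?thesis unfolding f_def using N1 by (simp add: cardA0)
  qed
  have fT: "f T \<le> 1 / real N"
  proof -
    have "Re (\<Sum>j\<in>idxA N. \<Sum>j'\<in>idxA N. \<rho> T j j') \<le> 1"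
    proof (rule fT_bound[OF N1 psd' fin])
      show "\<rho> T j j = 1 / of_nat N" if "j \<in> idxA N" for j using diag[OF _ that] T0 by simp
      show "1 \<le> Re (of_nat N * \<rho>' (x,x) (x,x))" if "x \<in> idxA N" for x
        using succ[OF that] op_trace_Pi[OF that] by simp
    qed
    then show ?thesis unfolding fS using N1 by (simp add: divide_right_mono)
  qed
  have w0: "0 < pi * sqrt (real N - 1) / real N" using N1 by simp
  have "arccos (sqrt (1 / real N)) \<le> (pi * sqrt (real N - 1) / real N) * T"
    by (rule angle_lemma[OF T0 w0 fder rng bnd f0 fT]) (use N1 in auto)
  then have "arccos (1 / sqrt (real N)) \<le> T * (pi * sqrt (real N - 1) / real N)"
    by (simp add: real_sqrt_divide mult.commute)
  then have "arccos (1 / sqrt (real N)) / (pi * sqrt (real N - 1) / real N) \<le> T"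
    by (simp only: pos_divide_le_eq[OF w0])
  moreover have "arccos (1 / sqrt (real N)) / (pi * sqrt (real N - 1) / real N) = 1 / pi * real N / sqrt (real N - 1) * arccos (1 / sqrt (real N))"
    using N1 by (simp add: field_simps)
  ultimately show ?thesis by (simp add: mult.commute)
qed



lemma sum_AM: "(\<Sum>x\<in>idxAM N. g x) = (\<Sum>a\<in>idxA N. \<Sum>k\<in>idxM N. g (a,k))"
  by (simp add: idxAM_def sum.cartesian_product)

lemma ptrace_psd:
  assumes psd: "psd_op (idxAM N) X"
  shows "psd_op (idxA N) (ptrace2 (idxM N) X)"
  unfolding psd_op_def
proof
  fix v :: "nat \<Rightarrow> complex"
  define w where "w m = (\<lambda>(a::nat,k::nat). if k = m then v a else 0)" for m
  have eq: "qf (idxAM N) X (w m) (w m) = (\<Sum>a\<in>idxA N. \<Sum>b\<in>idxA N. cnj (v a) * X (a,m) (b,m) * v b)"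
    if m: "m \<in> idxM N" for m
  proof -
    have "qf (idxAM N) X (w m) (w m) = (\<Sum>a\<in>idxA N. \<Sum>k\<in>idxM N. \<Sum>b\<in>idxA N. \<Sum>k'\<in>idxM N. cnj (w m (a,k)) * X (a,k) (b,k') * w m (b,k'))"
      unfolding qf_def by (simp only: sum_AM)
    also have "\<dots> = (\<Sum>a\<in>idxA N. \<Sum>k\<in>idxM N. if k = m then (\<Sum>b\<in>idxA N. cnj (v a) * X (a,m) (b,m) * v b) else 0)"
    proof (intro sum.cong refl)
      fix a k assume "k \<in> idxM N"
      show "(\<Sum>b\<in>idxA N. \<Sum>k'\<in>idxM N. cnj (w m (a,k)) * X (a,k) (b,k') * w m (b,k'))
          = (if k = m then (\<Sum>b\<in>idxA N. cnj (v a) * X (a,m) (b,m) * v b) else 0)"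
      proof (cases "k = m")
        case True
        have "(\<Sum>b\<in>idxA N. \<Sum>k'\<in>idxM N. cnj (w m (a,k)) * X (a,k) (b,k') * w m (b,k'))
            = (\<Sum>b\<in>idxA N. \<Sum>k'\<in>idxM N. if k' = m then cnj (v a) * X (a,m) (b,m) * v b else 0)"
          using True by (intro sum.cong refl) (auto simp: w_def)
        also have "\<dots> = (\<Sum>b\<in>idxA N. cnj (v a) * X (a,m) (b,m) * v b)" using m by simp
        finally show ?thesis using True by simp
      qed (simp add: w_def)
    qed
    also have "\<dots> = (\<Sum>a\<in>idxA N. \<Sum>b\<in>idxA N. cnj (v a) * X (a,m) (b,m) * v b)" using m by simp
    finally show ?thesis .
  qed
  have tot: "(\<Sum>a\<in>idxA N. \<Sum>b\<in>idxA N. cnj (v a) * ptrace2 (idxM N) X a b * v b) = (\<Sum>m\<in>idxM N. qf (idxAM N) X (w m) (w m))"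
  proof -
    have "(\<Sum>a\<in>idxA N. \<Sum>b\<in>idxA N. cnj (v a) * ptrace2 (idxM N) X a b * v b)
        = (\<Sum>a\<in>idxA N. \<Sum>b\<in>idxA N. \<Sum>m\<in>idxM N. cnj (v a) * X (a,m) (b,m) * v b)"
      unfolding ptrace2_def by (simp add: sum_distrib_left sum_distrib_right)
    also have "\<dots> = (\<Sum>a\<in>idxA N. \<Sum>m\<in>idxM N. \<Sum>b\<in>idxA N. cnj (v a) * X (a,m) (b,m) * v b)"
      by (rule sum.cong[OF refl], rule sum.swap)
    also have "\<dots> = (\<Sum>m\<in>idxM N. \<Sum>a\<in>idxA N. \<Sum>b\<in>idxA N. cnj (v a) * X (a,m) (b,m) * v b)"
      by (rule sum.swap)
    also have "\<dots> = (\<Sum>m\<in>idxM N. qf (idxAM N) X (w m) (w m))" by (intro sum.cong refl) (simp add: eq)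
    finally show ?thesis .
  qed
  show "(\<Sum>a\<in>idxA N. \<Sum>b\<in>idxA N. cnj (v a) * ptrace2 (idxM N) X a b * v b) \<in> \<real> \<and>
        0 \<le> Re (\<Sum>a\<in>idxA N. \<Sum>b\<in>idxA N. cnj (v a) * ptrace2 (idxM N) X a b * v b)"
    unfolding tot using psd_qf_real[OF psd] psd_qf_nonneg[OF psd]
    by (auto intro!: sum_in_Reals sum_nonneg)
qed

lemma rank1_psd: "psd_op I (\<lambda>a b. u a * cnj (u b))"
  unfolding psd_op_def
proof
  fix v :: "'a \<Rightarrow> complex"
  define z where "z = (\<Sum>a\<in>I. cnj (v a) * u a)"
  have "(\<Sum>a\<in>I. \<Sum>b\<in>I. cnj (v a) * (u a * cnj (u b)) * v b) = z * cnj z"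
    unfolding z_def by (simp add: sum_product mult_ac)
  then show "(\<Sum>a\<in>I. \<Sum>b\<in>I. cnj (v a) * (u a * cnj (u b)) * v b) \<in> \<real> \<and> 0 \<le> Re (\<Sum>a\<in>I. \<Sum>b\<in>I. cnj (v a) * (u a * cnj (u b)) * v b)"
    by (simp add: complex_mult_cnj)
qed



lemma num_bb: "(complex_of_real c - \<i> * complex_of_real (s * q)) * cnj (complex_of_real c - \<i> * complex_of_real (s * q))
   = complex_of_real (c^2 + s^2 * q^2)"
  by (simp add: complex_eq_iff power2_eq_square)

lemma num_gg: "(complex_of_real c + \<i> * complex_of_real (s / q)) * cnj (complex_of_real c + \<i> * complex_of_real (s / q))
   = complex_of_real (c^2 + s^2 / q^2)"
  by (simp add: complex_eq_iff power2_eq_square)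

lemma num_plus: "(complex_of_real c - \<i> * complex_of_real (s * q)) * cnj (complex_of_real c + \<i> * complex_of_real (s / q))
   + (complex_of_real c + \<i> * complex_of_real (s / q)) * cnj (complex_of_real c - \<i> * complex_of_real (s * q))
   = complex_of_real (2 * (c^2 - s^2))" if "q > 0"
  using that by (simp add: complex_eq_iff power2_eq_square field_simps)

lemma num_minus: "(complex_of_real c - \<i> * complex_of_real (s * q)) * cnj (complex_of_real c + \<i> * complex_of_real (s / q))
   - (complex_of_real c + \<i> * complex_of_real (s / q)) * cnj (complex_of_real c - \<i> * complex_of_real (s * q))
   = \<i> * complex_of_real (- 2 * c * s * (q + 1 / q))" if "q > 0"
  using that by (simp add: complex_eq_iff power2_eq_square field_simps)


lemma alg1:
  fixes q c s n :: real
  assumes "q > 0" "c^2 + s^2 = 1" "n = q^2 + 1"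
  shows "(c^2 + s^2 * q^2 + (n - 1) * (c^2 + s^2 / q^2)) / n^2 = 1 / n"
proof -
  have "c^2 + s^2 * q^2 + (n - 1) * (c^2 + s^2 / q^2) = n * (c^2 + s^2)"
    using assms(1) unfolding assms(3) by (simp add: field_simps power2_eq_square)
  then show ?thesis using assms by (simp add: power2_eq_square)
qed

lemma alg2:
  fixes q c s n :: real
  assumes "q > 0" "n = q^2 + 1"
  shows "(2 * (c^2 - s^2) + (n - 2) * (c^2 + s^2 / q^2)) / n^2 = (c^2 - s^2 / (n - 1)) / n"
proof -
  have "2 * (c^2 - s^2) + (n - 2) * (c^2 + s^2 / q^2) = n * (c^2 - s^2 / (n - 1))"
    using assms(1) unfolding assms(2) by (simp add: field_simps power2_eq_square)
  moreover have "n > 0" using assms by (simp add: add_pos_nonneg)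
  ultimately show ?thesis by (simp add: power2_eq_square)
qed

lemma alg3:
  fixes q c s n :: real
  assumes "q > 0" "n = q^2 + 1"
  shows "pi * (- 2 * c * s * (q + 1 / q) / n^2) = (2 * c * (- s * (pi * q / n)) - 2 * s * (c * (pi * q / n)) / (n - 1)) / n"
proof -
  have n0: "n > 0" using assms by (simp add: add_pos_nonneg)
  have h1: "q + 1 / q = n / q" using assms by (simp add: field_simps power2_eq_square)
  have h2: "n - 1 = q^2" using assms by simp
  have l: "pi * (- 2 * c * s * (q + 1 / q) / n^2) = - 2 * pi * c * s / (q * n)"
    unfolding h1 using n0 assms(1) by (simp add: field_simps power2_eq_square)
  have r: "(2 * c * (- s * (pi * q / n)) - 2 * s * (c * (pi * q / n)) / (n - 1)) / n = - 2 * pi * c * s * (q^2 + 1) / (q * n * n)"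
    unfolding h2 using n0 assms(1) by (simp add: field_simps power2_eq_square)
  show ?thesis unfolding l r assms(2)[symmetric] using n0 assms(1) by (simp add: field_simps)
qed


definition omg :: "nat \<Rightarrow> real" where "omg N = pi * sqrt (real N - 1) / real N"
definition bn :: "nat \<Rightarrow> real \<Rightarrow> complex" where
  "bn N t = complex_of_real (cos (omg N * t)) - \<i> * complex_of_real (sin (omg N * t) * sqrt (real N - 1))"
definition gn :: "nat \<Rightarrow> real \<Rightarrow> complex" where
  "gn N t = complex_of_real (cos (omg N * t)) + \<i> * complex_of_real (sin (omg N * t) / sqrt (real N - 1))"
definition Phi :: "nat \<Rightarrow> real \<Rightarrow> nat \<times> nat \<Rightarrow> complex" where
  "Phi N t a = (if snd a = 0 then 0 else if fst a = snd a then bn N t else gn N t) / of_nat N"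
definition rt :: "nat \<Rightarrow> real \<Rightarrow> nat \<times> nat \<Rightarrow> nat \<times> nat \<Rightarrow> complex" where
  "rt N t a b = Phi N t a * cnj (Phi N t b)"
definition qq :: "nat \<Rightarrow> real \<Rightarrow> real" where
  "qq N t = (cos (omg N * t))^2 - (sin (omg N * t))^2 / (real N - 1)"
definition rA :: "nat \<Rightarrow> real \<Rightarrow> nat \<Rightarrow> nat \<Rightarrow> complex" where
  "rA N t j j' = (if j = j' then complex_of_real (1 / real N) else complex_of_real (qq N t / real N))"
definition rP :: "nat \<Rightarrow> nat \<times> nat \<Rightarrow> nat \<times> nat \<Rightarrow> complex" where
  "rP N a b = (if a = b \<and> fst a = snd a then complex_of_real (1 / real N) else 0)"

lemma idxM_insert: "idxM N = insert 0 (idxA N)" and zero_notin: "0 \<notin> idxA N"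
  by (auto simp: idxM_def idxA_def)

lemma ptrace_rt:
  assumes N1: "N > 1" and j: "j \<in> idxA N" and j': "j' \<in> idxA N"
  shows "ptrace2 (idxM N) (rt N t) j j' = rA N t j j'"
proof -
  define c where "c = cos (omg N * t)"
  define s where "s = sin (omg N * t)"
  define q where "q = sqrt (real N - 1)"
  have q0: "q > 0" and qsq: "q^2 = real N - 1" unfolding q_def using N1 by auto
  have cs: "c^2 + s^2 = 1" unfolding c_def s_def by simp
  have bdef: "bn N t = complex_of_real c - \<i> * complex_of_real (s * q)" unfolding bn_def c_def s_def q_def ..
  have gdef: "gn N t = complex_of_real c + \<i> * complex_of_real (s / q)" unfolding gn_def c_def s_def q_def ..
  define h where "h m = (if j = m then bn N t else gn N t) * cnj (if j' = m then bn N t else gn N t) / (of_nat N)^2" for m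
  have "ptrace2 (idxM N) (rt N t) j j' = (\<Sum>m\<in>idxM N. Phi N t (j,m) * cnj (Phi N t (j',m)))"
    unfolding ptrace2_def rt_def ..
  also have "\<dots> = (\<Sum>m\<in>idxA N. Phi N t (j,m) * cnj (Phi N t (j',m)))"
    unfolding idxM_insert using zero_notin by (simp add: Phi_def)
  also have "\<dots> = (\<Sum>m\<in>idxA N. h m)"
    by (rule sum.cong[OF refl]) (auto simp: Phi_def h_def zero_notin power2_eq_square)
  finally have pt: "ptrace2 (idxM N) (rt N t) j j' = (\<Sum>m\<in>idxA N. h m)" .
  show ?thesis
  proof (cases "j = j'")
    case True
    have "(\<Sum>m\<in>idxA N. h m) = h j + (\<Sum>m\<in>idxA N - {j}. h m)" using j by (intro sum.remove) auto
    also have "(\<Sum>m\<in>idxA N - {j}. h m) = (\<Sum>m\<in>idxA N - {j}. gn N t * cnj (gn N t) / (of_nat N)^2)"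
      using True by (intro sum.cong refl) (auto simp: h_def)
    also have "\<dots> = of_nat (N - 1) * (gn N t * cnj (gn N t) / (of_nat N)^2)" using j by (simp add: cardA0)
    finally have "(\<Sum>m\<in>idxA N. h m) = (bn N t * cnj (bn N t) + of_nat (N - 1) * (gn N t * cnj (gn N t))) / (of_nat N)^2"
      using True by (simp add: h_def add_divide_distrib)
    also have "\<dots> = complex_of_real ((c^2 + s^2 * q^2 + (real N - 1) * (c^2 + s^2 / q^2)) / (real N)^2)"
      unfolding bdef gdef num_bb num_gg using N1 by (simp add: of_nat_diff)
    also have "(c^2 + s^2 * q^2 + (real N - 1) * (c^2 + s^2 / q^2)) / (real N)^2 = 1 / real N"
      by (rule alg1[OF q0 cs]) (use qsq in simp)
    finally show ?thesis using pt True by (simp add: rA_def)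
  next
    case False
    have "(\<Sum>m\<in>idxA N. h m) = h j + (\<Sum>m\<in>idxA N - {j}. h m)" using j by (intro sum.remove) auto
    also have "(\<Sum>m\<in>idxA N - {j}. h m) = h j' + (\<Sum>m\<in>idxA N - {j} - {j'}. h m)" using j' False by (intro sum.remove) auto
    also have "(\<Sum>m\<in>idxA N - {j} - {j'}. h m) = (\<Sum>m\<in>idxA N - {j} - {j'}. gn N t * cnj (gn N t) / (of_nat N)^2)"
      by (intro sum.cong refl) (auto simp: h_def)
    also have "card (idxA N - {j} - {j'}) = N - 2" using j j' False by (simp add: cardA0)
    then have "(\<Sum>m\<in>idxA N - {j} - {j'}. gn N t * cnj (gn N t) / (of_nat N)^2) = of_nat (N - 2) * (gn N t * cnj (gn N t) / (of_nat N)^2)"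
      by simp
    finally have "(\<Sum>m\<in>idxA N. h m) = (bn N t * cnj (gn N t) + gn N t * cnj (bn N t) + of_nat (N - 2) * (gn N t * cnj (gn N t))) / (of_nat N)^2"
      using False by (simp add: h_def add_divide_distrib)
    also have "\<dots> = complex_of_real ((2 * (c^2 - s^2) + (real N - 2) * (c^2 + s^2 / q^2)) / (real N)^2)"
      unfolding bdef gdef num_gg num_plus[OF q0] using N1 by (simp add: of_nat_diff)
    also have "(2 * (c^2 - s^2) + (real N - 2) * (c^2 + s^2 / q^2)) / (real N)^2 = qq N t / real N"
      unfolding qq_def c_def[symmetric] s_def[symmetric]
      by (rule alg2[OF q0]) (use qsq in simp)
    finally show ?thesis using pt False by (simp add: rA_def)
  qed
qed


definition Ts :: "nat \<Rightarrow> real" where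
  "Ts N = 1 / pi * real N / sqrt (real N - 1) * arccos (1 / sqrt (real N))"

lemma omg_Ts: "N > 1 \<Longrightarrow> omg N * Ts N = arccos (1 / sqrt (real N))"
  unfolding omg_def Ts_def by (simp add: field_simps)

lemma x_range: "N > 1 \<Longrightarrow> -1 \<le> 1 / sqrt (real N) \<and> 1 / sqrt (real N) \<le> 1"
proof -
  assume N1: "N > 1"
  have "0 \<le> 1 / sqrt (real N)" by simp
  moreover have "1 / sqrt (real N) \<le> 1" using N1 by simp
  ultimately show ?thesis by linarith
qed

lemma Ts_nonneg: "N > 1 \<Longrightarrow> 0 \<le> Ts N"
  unfolding Ts_def using x_range[of N] by (intro mult_nonneg_nonneg divide_nonneg_nonneg arccos_lbound) auto

lemma qq_Ts: assumes N1: "N > 1" shows "qq N (Ts N) = 0"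
proof -
  have x: "-1 \<le> 1 / sqrt (real N)" "1 / sqrt (real N) \<le> 1" using x_range[OF N1] by auto
  have c: "cos (omg N * Ts N) = 1 / sqrt (real N)" unfolding omg_Ts[OF N1] using x by (simp add: cos_arccos)
  have c2: "(cos (omg N * Ts N))^2 = 1 / real N" unfolding c using N1 by (simp add: power_divide)
  have s2: "(sin (omg N * Ts N))^2 = 1 - 1 / real N" using c2 sin_cos_squared_add[of "omg N * Ts N"] by linarith
  show ?thesis unfolding qq_def c2 s2 using N1 by (simp add: field_simps)
qed

lemma qq_0: "N > 1 \<Longrightarrow> qq N 0 = 1" unfolding qq_def by simp

lemma rA_deriv:
  assumes N1: "N > 1" and j: "j \<in> idxA N" and j': "j' \<in> idxA N"
  shows "((\<lambda>s. rA N s j j') has_vector_derivative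
     (- \<i> * (complex_of_real pi * (rt N t (j,j) (j',j) - rt N t (j,j') (j',j'))))) (at t)"
proof (cases "j = j'")
  case True
  then show ?thesis by (simp add: rA_def)
next
  case False
  define c where "c = cos (omg N * t)"
  define s where "s = sin (omg N * t)"
  define q where "q = sqrt (real N - 1)"
  have q0: "q > 0" and qsq: "q^2 = real N - 1" unfolding q_def using N1 by auto
  have jn0: "j \<noteq> 0" "j' \<noteq> 0" using j j' by (auto simp: idxA_def)
  have bdef: "bn N t = complex_of_real c - \<i> * complex_of_real (s * q)" unfolding bn_def c_def s_def q_def ..
  have gdef: "gn N t = complex_of_real c + \<i> * complex_of_real (s / q)" unfolding gn_def c_def s_def q_def ..
  define qd where "qd = 2 * c * (- s * omg N) - 2 * s * (c * omg N) / (real N - 1)"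
  have qq_alt: "qq N = (\<lambda>s. (cos (omg N * s))^2 - (sin (omg N * s))^2 * (1 / (real N - 1)))"
    by (simp add: qq_def fun_eq_iff)
  have dq: "(qq N has_real_derivative qd) (at t)"
    unfolding qq_alt qd_def c_def s_def using N1
    by (auto intro!: derivative_eq_intros simp: power2_eq_square)
  have "((\<lambda>s. complex_of_real (qq N s / real N)) has_vector_derivative complex_of_real (qd / real N)) (at t)"
    by (intro has_vector_derivative_of_real DERIV_cdivide dq)
  moreover have "(\<lambda>s. rA N s j j') = (\<lambda>s. complex_of_real (qq N s / real N))"
    using False by (simp add: rA_def)
  moreover have "- \<i> * (complex_of_real pi * (rt N t (j,j) (j',j) - rt N t (j,j') (j',j'))) = complex_of_real (qd / real N)"
  proof -
    have "rt N t (j,j) (j',j) - rt N t (j,j') (j',j') = (bn N t * cnj (gn N t) - gn N t * cnj (bn N t)) / (of_nat N)^2"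
      unfolding rt_def Phi_def using False jn0 by (simp add: power2_eq_square diff_divide_distrib)
    also have "\<dots> = \<i> * complex_of_real (- 2 * c * s * (q + 1 / q) / (real N)^2)"
      unfolding bdef gdef num_minus[OF q0] by (simp only: of_real_divide of_real_power of_real_of_nat_eq mult.assoc times_divide_eq_right)
    finally have e0: "rt N t (j,j) (j',j) - rt N t (j,j') (j',j') = \<i> * complex_of_real (- 2 * c * s * (q + 1 / q) / (real N)^2)" .
    define r where "r = - 2 * c * s * (q + 1 / q) / (real N)^2"
    have e: "- \<i> * (complex_of_real pi * (rt N t (j,j) (j',j) - rt N t (j,j') (j',j')))
        = complex_of_real (pi * (- 2 * c * s * (q + 1 / q) / (real N)^2))"
      unfolding e0 r_def[symmetric] by (simp add: complex_eq_iff)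
    have "pi * (- 2 * c * s * (q + 1 / q) / (real N)^2) = qd / real N"
      unfolding qd_def omg_def q_def[symmetric]
      by (rule alg3[OF q0]) (use qsq in simp)
    then show ?thesis unfolding e by simp
  qed
  ultimately show ?thesis by simp
qed


lemma psd_cong: "(\<And>a b. a \<in> I \<Longrightarrow> b \<in> I \<Longrightarrow> X a b = Y a b) \<Longrightarrow> psd_op I X = psd_op I Y"
  unfolding psd_op_def by (simp cong: sum.cong)

lemma rP_psd: "psd_op (idxAM N) (rP N)"
  unfolding psd_op_def
proof
  fix v :: "nat \<times> nat \<Rightarrow> complex"
  have "(\<Sum>a\<in>idxAM N. \<Sum>b\<in>idxAM N. cnj (v a) * rP N a b * v b)
      = (\<Sum>a\<in>idxAM N. complex_of_real (if fst a = snd a then (Re (v a)^2 + Im (v a)^2) / real N else 0))"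
  proof (rule sum.cong[OF refl])
    fix a assume a: "a \<in> idxAM N"
    have "(\<Sum>b\<in>idxAM N. cnj (v a) * rP N a b * v b) = (\<Sum>b\<in>idxAM N. if b = a then (if fst a = snd a then cnj (v a) * v a / of_nat N else 0) else 0)"
      by (rule sum.cong[OF refl]) (auto simp: rP_def)
    also have "\<dots> = (if fst a = snd a then cnj (v a) * v a / of_nat N else 0)"
      using a by simp
    also have "\<dots> = complex_of_real (if fst a = snd a then (Re (v a)^2 + Im (v a)^2) / real N else 0)"
      by (simp add: complex_eq_iff power2_eq_square)
    finally show "(\<Sum>b\<in>idxAM N. cnj (v a) * rP N a b * v b) = complex_of_real (if fst a = snd a then (Re (v a)^2 + Im (v a)^2) / real N else 0)" .
  qed
  then show "(\<Sum>a\<in>idxAM N. \<Sum>b\<in>idxAM N. cnj (v a) * rP N a b * v b) \<in> \<real> \<and> 0 \<le> Re (\<Sum>a\<in>idxAM N. \<Sum>b\<in>idxAM N. cnj (v a) * rP N a b * v b)"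
    by (auto intro!: sum_nonneg simp flip: of_real_sum)
qed


lemma rt_eq: "rt N t = (\<lambda>a b. Phi N t a * cnj (Phi N t b))" by (simp add: fun_eq_iff rt_def)

lemma bn_cont: "continuous_on S (\<lambda>t. bn N t)"
  unfolding bn_def by (intro continuous_intros)

lemma gn_cont: "N > 1 \<Longrightarrow> continuous_on S (\<lambda>t. gn N t)"
  unfolding gn_def by (intro continuous_intros) auto

lemma Phi_cont: "N > 1 \<Longrightarrow> continuous_on S (\<lambda>t. Phi N t a)"
  unfolding Phi_def
  by (cases "snd a = 0"; cases "fst a = snd a") (auto intro!: continuous_intros bn_cont gn_cont)

lemma rt_cont: "N > 1 \<Longrightarrow> continuous_on S (\<lambda>t. rt N t a b)"
  unfolding rt_def by (intro continuous_intros Phi_cont)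

lemma exists_protocol:
  assumes N1: "N > 1"
  shows "grover_protocol N (Ts N) 1 (rA N) (rt N) (rP N)"
  unfolding grover_protocol_def
proof (intro conjI ballI)
  show "0 \<le> Ts N" by (rule Ts_nonneg[OF N1])
next
  fix t assume "t \<in> {0..Ts N}"
  have "psd_op (idxA N) (ptrace2 (idxM N) (rt N t))" unfolding rt_eq by (intro ptrace_psd rank1_psd)
  then show "psd_op (idxA N) (rA N t)" by (subst psd_cong[where Y = "ptrace2 (idxM N) (rt N t)"]) (auto simp: ptrace_rt[OF N1])
next
  fix t assume "t \<in> {0..Ts N}"
  show "psd_op (idxAM N) (rt N t)" unfolding rt_eq by (rule rank1_psd)
next
  show "psd_op (idxAM N) (rP N)" by (rule rP_psd)
next
  fix a b assume "a \<in> idxAM N" "b \<in> idxAM N"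
  show "continuous_on {0..Ts N} (\<lambda>t. rt N t a b)" by (rule rt_cont[OF N1])
next
  fix j j' assume "j \<in> idxA N" "j' \<in> idxA N"
  show "rA N 0 j j' = psi0 N j * cnj (psi0 N j')"
    using N1 by (simp add: psi0_prod rA_def qq_0)
next
  fix t j j' assume "t \<in> {0..Ts N}" "j \<in> idxA N" "j' \<in> idxA N"
  then show "ptrace2 (idxM N) (rt N t) j j' = rA N t j j'" by (simp add: ptrace_rt[OF N1])
next
  fix t j j' assume t: "t \<in> {0..Ts N}" and j: "j \<in> idxA N" and j': "j' \<in> idxA N"
  show "((\<lambda>s. rA N s j j') has_vector_derivative
           (- \<i> * ptrace2 (idxM N)
               (\<lambda>a b. op_mult (idxAM N) (groverH N) (rt N t) a b
                      - op_mult (idxAM N) (rt N t) (groverH N) a b) j j'))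
         (at t within {0..Ts N})"
    unfolding ptrace_comm[OF j j'] by (rule has_vector_derivative_at_within, rule rA_deriv[OF N1 j j'])
next
  fix j j' assume j: "j \<in> idxA N" and j': "j' \<in> idxA N"
  have "ptrace2 (idxM N) (rP N) j j' = (\<Sum>m\<in>idxM N. if m = j then (if j = j' then complex_of_real (1 / real N) else 0) else 0)"
    unfolding ptrace2_def by (rule sum.cong[OF refl]) (auto simp: rP_def)
  also have "\<dots> = (if j = j' then complex_of_real (1 / real N) else 0)" using j by (simp add: idxA_sub)
  also have "\<dots> = rA N (Ts N) j j'" by (simp add: rA_def qq_Ts[OF N1])
  finally show "ptrace2 (idxM N) (rP N) j j' = rA N (Ts N) j j'" .
next
  fix x assume x: "x \<in> idxA N"
  show "1 \<le> Re (op_trace (idxAM N) (op_mult (idxAM N) (groverPi N x) (rP N)))"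
    unfolding op_trace_Pi[OF x] using N1 by (simp add: rP_def)
qed



lemma arccos_eq_arctan:
  assumes N1: "N > (1::nat)"
  shows "arccos (1 / sqrt (real N)) = arctan (sqrt (real N - 1))"
proof -
  have x0: "0 < 1 / sqrt (real N)" using N1 by simp
  have x: "-1 < 1 / sqrt (real N)" "1 / sqrt (real N) < 1" using x0 apply linarith using N1 by simp
  have "(1 / sqrt (real N))^2 = 1 / real N" using N1 by (simp add: power_divide)
  then have "sqrt (1 - (1 / sqrt (real N))^2) = sqrt (real N - 1) / sqrt (real N)"
    using N1 by (simp add: field_simps real_sqrt_divide)
  then have "1 / sqrt (real N) / sqrt (1 - (1 / sqrt (real N))^2) = 1 / sqrt (real N - 1)"
    using N1 by simp
  then have "arccos (1 / sqrt (real N)) = pi / 2 - arctan (1 / sqrt (real N - 1))"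
    using arccos_arctan[OF x] by simp
  also have "arctan (1 / sqrt (real N - 1)) = pi / 2 - arctan (sqrt (real N - 1))"
    using arctan_inverse[of "sqrt (real N - 1)"] N1 by (simp add: inverse_eq_divide)
  finally show ?thesis by simp
qed

lemma asym:
  "(\<lambda>N::nat. 1 / pi * real N / sqrt (real N - 1) * arccos (1 / sqrt (real N))
               - (sqrt (real N) / 2 - 1 / pi)) \<in> O(\<lambda>N. 1 / sqrt (real N))"
proof -
  have ev: "eventually (\<lambda>N::nat. 1 / pi * real N / sqrt (real N - 1) * arccos (1 / sqrt (real N))
               - (sqrt (real N) / 2 - 1 / pi) = 1 / pi * real N / sqrt (real N - 1) * arctan (sqrt (real N - 1))
               - (sqrt (real N) / 2 - 1 / pi)) at_top"
    using eventually_gt_at_top[of 1] by eventually_elim (simp add: arccos_eq_arctan)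
  have "(\<lambda>N::nat. 1 / pi * real N / sqrt (real N - 1) * arctan (sqrt (real N - 1))
               - (sqrt (real N) / 2 - 1 / pi)) \<in> O(\<lambda>N. 1 / sqrt (real N))"
    by real_asymp
  then show ?thesis using landau_o.big.in_cong[OF ev] by simp
qed



theorem mainTheorem2:
  shows "(\<forall>N::nat. N > 1 \<longrightarrow>
      (\<exists>\<rho> \<rho>t \<rho>'. grover_protocol N
          (1 / pi * real N / sqrt (real N - 1) * arccos (1 / sqrt (real N))) 1 \<rho> \<rho>t \<rho>') \<and>
      (\<forall>T \<rho> \<rho>t \<rho>'. grover_protocol N T 1 \<rho> \<rho>t \<rho>' \<longrightarrow>
          1 / pi * real N / sqrt (real N - 1) * arccos (1 / sqrt (real N)) \<le> T)) \<and>
    (\<lambda>N::nat. 1 / pi * real N / sqrt (real N - 1) * arccos (1 / sqrt (real N))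
               - (sqrt (real N) / 2 - 1 / pi)) \<in> O(\<lambda>N. 1 / sqrt (real N))"
proof -
  have part1: "\<forall>N::nat. N > 1 \<longrightarrow>
      (\<exists>\<rho> \<rho>t \<rho>'. grover_protocol N
          (1 / pi * real N / sqrt (real N - 1) * arccos (1 / sqrt (real N))) 1 \<rho> \<rho>t \<rho>') \<and>
      (\<forall>T \<rho> \<rho>t \<rho>'. grover_protocol N T 1 \<rho> \<rho>t \<rho>' \<longrightarrow>
          1 / pi * real N / sqrt (real N - 1) * arccos (1 / sqrt (real N)) \<le> T)"
  proof (rule allI, rule impI, rule conjI)
    fix N :: nat assume N1: "N > 1"
    show "\<exists>\<rho> \<rho>t \<rho>'. grover_protocol N
          (1 / pi * real N / sqrt (real N - 1) * arccos (1 / sqrt (real N))) 1 \<rho> \<rho>t \<rho>'"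
      using exists_protocol[OF N1] unfolding Ts_def by blast
    show "\<forall>T \<rho> \<rho>t \<rho>'. grover_protocol N T 1 \<rho> \<rho>t \<rho>' \<longrightarrow>
          1 / pi * real N / sqrt (real N - 1) * arccos (1 / sqrt (real N)) \<le> T"
      using lower[OF N1] by blast
  qed
  show ?thesis using part1 asym by blast
qed

end
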